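(* If $\mathcal{E}\subseteq \mathcal{P}(S)$ is a self-dissecting collection of sets, then $\mathfrak{H}(\mathcal{E})= \mathcal{C}(\mathcal{E})$.
   Context: $C(S)$ is the set of countable subsets of a set $S$; for $A\subseteq S$, $N_A:C(S)\to\mathbb{N}_0\cup\{\infty\}$, $M\mapsto|A\cap M|$. For nonempty $\mathcal{T}\subseteq\mathcal{P}(S)$: $\mathcal{C}(\mathcal{T})=\sigma(N_A\mid A\in\mathcal{T})$ and $\mathfrak{H}(\mathcal{T})=\sigma(\{N_A\neq0\}\mid A\in\mathcal{T})$, both $\sigma$-fields on $C(S)$. Dissecting system for $A\subseteq S$: families $\{A_{n,k}\mid k\in I_n\}$, $I_n\subseteq\mathbb{N}$, $n\in\mathbb{N}$, such that (i) for each $n$ the $A_{n,k}$ are pairwise disjoint, $\bigcup_{k\in I_n}A_{n,k}\subseteq\bigcup_{k\in I_{n+1}}A_{n+1,k}\subseteq A$ and $\bigcup_{n,k}A_{n,k}=A$; (ii) for distinct $x,y\in A$ there is $n(x,y)$ such that for all $n\ge n(x,y)$ some $A_{n,k}$ contains exactly one of $x,y$. A nonempty $\mathcal{E}\subseteq\mathcal{P}(S)$ is self-dissecting if each $A\in\mathcal{E}$ has a dissecting system with all $A_{n,k}\in\mathcal{E}$. *)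

theory Defs
  imports "HOL-Analysis.Analysis"
begin

definition Csets :: "'a set \<Rightarrow> 'a set set" where
  "Csets S = {M. M \<subseteq> S \<and> countable M}"

definition Ncount :: "'a set \<Rightarrow> 'a set \<Rightarrow> enat" where
  "Ncount A M = (if finite (A \<inter> M) then enat (card (A \<inter> M)) else \<infinity>)"

text \<open>\<C>(T) = \<sigma>(N_A | A \<in> T): generated by all preimages N_A^{-1}(B), B \<subseteq> N_0 \<union> {\<infinity>}
  (the value space carries its power set, i.e. it is discrete).\<close>
definition CC :: "'a set \<Rightarrow> 'a set set \<Rightarrow> 'a set set set" where
  "CC S T = sigma_sets (Csets S)
     {{M \<in> Csets S. Ncount A M \<in> B} | A B. A \<in> T}"

definition HH :: "'a set \<Rightarrow> 'a set set \<Rightarrow> 'a set set set" where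
  "HH S T = sigma_sets (Csets S) {{M \<in> Csets S. Ncount A M \<noteq> 0} | A. A \<in> T}"

definition dissecting_system :: "'a set \<Rightarrow> (nat \<Rightarrow> nat set) \<Rightarrow> (nat \<Rightarrow> nat \<Rightarrow> 'a set) \<Rightarrow> bool" where
  "dissecting_system A I D \<longleftrightarrow>
     (\<forall>n. disjoint_family_on (D n) (I n)) \<and>
     (\<forall>n. (\<Union>k\<in>I n. D n k) \<subseteq> (\<Union>k\<in>I (Suc n). D (Suc n) k)) \<and>
     (\<forall>n. (\<Union>k\<in>I n. D n k) \<subseteq> A) \<and>
     (\<Union>n. \<Union>k\<in>I n. D n k) = A \<and>
     (\<forall>x\<in>A. \<forall>y\<in>A. x \<noteq> y \<longrightarrow>
        (\<exists>n0. \<forall>n\<ge>n0. \<exists>k\<in>I n. (x \<in> D n k) \<noteq> (y \<in> D n k)))"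

definition self_dissecting :: "'a set set \<Rightarrow> bool" where
  "self_dissecting E \<longleftrightarrow> E \<noteq> {} \<and>
     (\<forall>A\<in>E. \<exists>I D. dissecting_system A I D \<and> (\<forall>n. \<forall>k\<in>I n. D n k \<in> E))"

end

theory Submission
  imports Defs
begin

lemma Ncount_ge:
  "enat j \<le> Ncount A M \<longleftrightarrow> (\<exists>F. finite F \<and> card F = j \<and> F \<subseteq> A \<inter> M)"
proof (cases "finite (A \<inter> M)")
  case True
  show ?thesis
  proof
    assume "enat j \<le> Ncount A M"
    then have "j \<le> card (A \<inter> M)" using True by (simp add: Ncount_def)
    then obtain T where "T \<subseteq> A \<inter> M" "card T = j" "finite T" by (rule obtain_subset_with_card_n)
    then show "\<exists>F. finite F \<and> card F = j \<and> F \<subseteq> A \<inter> M" by blast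
  next
    assume "\<exists>F. finite F \<and> card F = j \<and> F \<subseteq> A \<inter> M"
    then obtain F where "finite F" "card F = j" "F \<subseteq> A \<inter> M" by blast
    then have "j \<le> card (A \<inter> M)" using True card_mono by blast
    then show "enat j \<le> Ncount A M" using True by (simp add: Ncount_def)
  qed
next
  case False
  then show ?thesis using infinite_arbitrarily_large[OF False] by (simp add: Ncount_def)
qed

lemma Ncount_ne0: "Ncount A M \<noteq> 0 \<longleftrightarrow> A \<inter> M \<noteq> {}"
  by (auto simp: Ncount_def zero_enat_def)

lemma level_mono:
  assumes "\<forall>n. (\<Union>k\<in>I n. D n k) \<subseteq> (\<Union>k\<in>I (Suc n). D (Suc n) k)"
  shows "m \<le> n \<Longrightarrow> (\<Union>k\<in>I m. D m k) \<subseteq> (\<Union>k\<in>I n. D n k)"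
proof (induction n)
  case 0 then show ?case by simp
next
  case (Suc n)
  show ?case
  proof (cases "m = Suc n")
    case True then show ?thesis by simp
  next
    case False
    then have "m \<le> n" using Suc.prems by simp
    then show ?thesis using Suc.IH assms by blast
  qed
qed

lemma key_eq:
  assumes ds: "dissecting_system A I D"
  shows "{M \<in> Csets S. \<exists>F. finite F \<and> card F = j \<and> F \<subseteq> A \<inter> M}
    = (\<Union>n. \<Union>F\<in>{F. finite F \<and> F \<subseteq> I n \<and> card F = j}. {M \<in> Csets S. \<forall>k\<in>F. D n k \<inter> M \<noteq> {}})"
proof (intro equalityI subsetI)
  fix M assume "M \<in> {M \<in> Csets S. \<exists>F. finite F \<and> card F = j \<and> F \<subseteq> A \<inter> M}"
  then obtain F where M: "M \<in> Csets S" and F: "finite F" "card F = j" "F \<subseteq> A \<inter> M" by blast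
  have disj: "\<And>n. disjoint_family_on (D n) (I n)"
    and mono: "\<forall>n. (\<Union>k\<in>I n. D n k) \<subseteq> (\<Union>k\<in>I (Suc n). D (Suc n) k)"
    and cov: "(\<Union>n. \<Union>k\<in>I n. D n k) = A"
    and sep: "\<forall>x\<in>A. \<forall>y\<in>A. x \<noteq> y \<longrightarrow> (\<exists>n0. \<forall>n\<ge>n0. \<exists>k\<in>I n. (x \<in> D n k) \<noteq> (y \<in> D n k))"
    using ds unfolding dissecting_system_def by simp_all
  have ev: "\<forall>p\<in>F \<times> F. eventually (\<lambda>n. (fst p \<noteq> snd p \<longrightarrow> (\<exists>k\<in>I n. (fst p \<in> D n k) \<noteq> (snd p \<in> D n k)))
        \<and> (\<exists>k\<in>I n. fst p \<in> D n k)) sequentially"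
  proof
    fix p assume p: "p \<in> F \<times> F"
    then have x: "fst p \<in> A" "snd p \<in> A" using F by auto
    then obtain m where "fst p \<in> (\<Union>k\<in>I m. D m k)" using cov by blast
    then have e1: "eventually (\<lambda>n. \<exists>k\<in>I n. fst p \<in> D n k) sequentially"
      unfolding eventually_sequentially using level_mono[OF mono] by blast
    have e2: "eventually (\<lambda>n. fst p \<noteq> snd p \<longrightarrow> (\<exists>k\<in>I n. (fst p \<in> D n k) \<noteq> (snd p \<in> D n k))) sequentially"
    proof (cases "fst p = snd p")
      case True then show ?thesis by simp
    next
      case False
      then obtain n0 where "\<forall>n\<ge>n0. \<exists>k\<in>I n. (fst p \<in> D n k) \<noteq> (snd p \<in> D n k)"
        using sep x by blast
      then show ?thesis unfolding eventually_sequentially by blast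
    qed
    show "eventually (\<lambda>n. (fst p \<noteq> snd p \<longrightarrow> (\<exists>k\<in>I n. (fst p \<in> D n k) \<noteq> (snd p \<in> D n k)))
        \<and> (\<exists>k\<in>I n. fst p \<in> D n k)) sequentially"
      using e1 e2 eventually_conj by blast
  qed
  have "eventually (\<lambda>n. \<forall>p\<in>F \<times> F. (fst p \<noteq> snd p \<longrightarrow> (\<exists>k\<in>I n. (fst p \<in> D n k) \<noteq> (snd p \<in> D n k)))
        \<and> (\<exists>k\<in>I n. fst p \<in> D n k)) sequentially"
    using eventually_ball_finite[OF _ ev] F by blast
  then obtain n where n: "\<forall>p\<in>F \<times> F. (fst p \<noteq> snd p \<longrightarrow> (\<exists>k\<in>I n. (fst p \<in> D n k) \<noteq> (snd p \<in> D n k)))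
        \<and> (\<exists>k\<in>I n. fst p \<in> D n k)"
    unfolding eventually_sequentially by blast
  have "\<forall>x\<in>F. \<exists>k. k \<in> I n \<and> x \<in> D n k" using n by fastforce
  then obtain g where g: "\<And>x. x \<in> F \<Longrightarrow> g x \<in> I n \<and> x \<in> D n (g x)" by metis
  have inj: "inj_on g F"
  proof (rule inj_onI, rule ccontr)
    fix x y assume xy: "x \<in> F" "y \<in> F" "g x = g y" "x \<noteq> y"
    then obtain k where k: "k \<in> I n" "(x \<in> D n k) \<noteq> (y \<in> D n k)" using n by fastforce
    have gx: "g x \<in> I n" "x \<in> D n (g x)" "y \<in> D n (g x)" using g xy by metis+
    show False
    proof (cases "k = g x")
      case True then show ?thesis using k gx by simp
    next
      case False
      then have "D n k \<inter> D n (g x) = {}" using disj[of n] k gx unfolding disjoint_family_on_def by blast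
      then show ?thesis using k gx by blast
    qed
  qed
  have "g ` F \<in> {F. finite F \<and> F \<subseteq> I n \<and> card F = j}"
    using F inj g card_image by fastforce
  moreover have "M \<in> {M \<in> Csets S. \<forall>k\<in>g ` F. D n k \<inter> M \<noteq> {}}"
    using M g F by blast
  ultimately show "M \<in> (\<Union>n. \<Union>F\<in>{F. finite F \<and> F \<subseteq> I n \<and> card F = j}. {M \<in> Csets S. \<forall>k\<in>F. D n k \<inter> M \<noteq> {}})"
    by blast
next
  fix M assume "M \<in> (\<Union>n. \<Union>F\<in>{F. finite F \<and> F \<subseteq> I n \<and> card F = j}. {M \<in> Csets S. \<forall>k\<in>F. D n k \<inter> M \<noteq> {}})"
  then obtain n F where M: "M \<in> Csets S" and F: "finite F" "F \<subseteq> I n" "card F = j"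
    and hit: "\<forall>k\<in>F. D n k \<inter> M \<noteq> {}" by blast
  have disj: "disjoint_family_on (D n) (I n)" and sub: "(\<Union>k\<in>I n. D n k) \<subseteq> A"
    using ds unfolding dissecting_system_def by simp_all
  have "\<forall>k\<in>F. \<exists>y. y \<in> D n k \<inter> M" using hit by blast
  then obtain x where x: "\<And>k. k \<in> F \<Longrightarrow> x k \<in> D n k \<inter> M" by metis
  have inj: "inj_on x F"
  proof (rule inj_onI, rule ccontr)
    fix k l assume kl: "k \<in> F" "l \<in> F" "x k = x l" "k \<noteq> l"
    then have "D n k \<inter> D n l = {}" using disj F unfolding disjoint_family_on_def by blast
    then show False using x kl by (metis IntD1 disjoint_iff)
  qed
  have "x ` F \<subseteq> A \<inter> M" using x F sub by blast
  then show "M \<in> {M \<in> Csets S. \<exists>F. finite F \<and> card F = j \<and> F \<subseteq> A \<inter> M}"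
    using M F inj card_image by (intro CollectI conjI exI[of _ "x ` F"]) auto
qed

theorem theorem3p1:
  fixes S :: "'a set" and E :: "'a set set"
  assumes "E \<subseteq> Pow S"
    and "self_dissecting E"
  shows "HH S E = CC S E"
proof
  show "HH S E \<subseteq> CC S E"
    unfolding HH_def CC_def
  proof (rule sigma_sets_subseteq, safe)
    fix A assume "A \<in> E"
    then show "\<exists>A' B. {M \<in> Csets S. Ncount A M \<noteq> 0} = {M \<in> Csets S. Ncount A' M \<in> B} \<and> A' \<in> E"
      by (intro exI[of _ A] exI[of _ "- {0}"]) auto
  qed
next
  let ?G = "{{M \<in> Csets S. Ncount A M \<noteq> 0} | A. A \<in> E}"
  have gsub: "?G \<subseteq> Pow (Csets S)" by auto
  interpret sa: sigma_algebra "Csets S" "HH S E"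
    unfolding HH_def by (rule sigma_algebra_sigma_sets[OF gsub])
  have gen: "{M \<in> Csets S. Ncount X M \<noteq> 0} \<in> HH S E" if "X \<in> E" for X
    unfolding HH_def using that by blast
  define P where "P A j = {M \<in> Csets S. \<exists>F. finite F \<and> card F = j \<and> F \<subseteq> A \<inter> M}" for A j
  have Pin: "P A j \<in> HH S E" if "A \<in> E" for A j
  proof -
    obtain I D where ds: "dissecting_system A I D" and DE: "\<forall>n. \<forall>k\<in>I n. D n k \<in> E"
      using assms(2) \<open>A \<in> E\<close> unfolding self_dissecting_def by blast
    have Q: "{M \<in> Csets S. \<forall>k\<in>F. D n k \<inter> M \<noteq> {}} \<in> HH S E"
      if "F \<in> {F. finite F \<and> F \<subseteq> I n \<and> card F = j}" for n F
    proof (cases "F = {}")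
      case True then show ?thesis using sa.top by simp
    next
      case False
      have "{M \<in> Csets S. \<forall>k\<in>F. D n k \<inter> M \<noteq> {}} = (\<Inter>k\<in>F. {M \<in> Csets S. Ncount (D n k) M \<noteq> 0})"
        using False by (auto simp: Ncount_ne0)
      also have "\<dots> \<in> HH S E"
        using that False DE gen by (intro sa.finite_INT) auto
      finally show ?thesis .
    qed
    have "(\<Union>F\<in>{F. finite F \<and> F \<subseteq> I n \<and> card F = j}. {M \<in> Csets S. \<forall>k\<in>F. D n k \<inter> M \<noteq> {}}) \<in> HH S E" for n
    proof (rule sa.countable_UN'')
      show "countable {F. finite F \<and> F \<subseteq> I n \<and> card F = j}"
        by (rule countable_subset[OF _ countable_Collect_finite]) auto
    qed (rule Q)
    then show ?thesis unfolding P_def key_eq[OF ds] by blast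
  qed
  show "CC S E \<subseteq> HH S E"
    unfolding CC_def
  proof (rule sa.sigma_sets_subset, safe)
    fix A B assume A: "A \<in> E"
    have PN: "M \<in> P A j \<longleftrightarrow> M \<in> Csets S \<and> enat j \<le> Ncount A M" for M j
      unfolding P_def Ncount_ge by blast
    have eq: "{M \<in> Csets S. Ncount A M \<in> B} =
       (\<Union>j. if enat j \<in> B then P A j - P A (Suc j) else {}) \<union> (if \<infinity> \<in> B then (\<Inter>j. P A j) \<inter> Csets S else {})"
    proof (intro equalityI subsetI)
      fix M assume M: "M \<in> {M \<in> Csets S. Ncount A M \<in> B}"
      show "M \<in> (\<Union>j. if enat j \<in> B then P A j - P A (Suc j) else {}) \<union> (if \<infinity> \<in> B then (\<Inter>j. P A j) \<inter> Csets S else {})"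
      proof (cases "Ncount A M")
        case (enat j)
        have "M \<in> P A j - P A (Suc j)" using M enat PN[of M j] PN[of M "Suc j"] by simp
        moreover have "enat j \<in> B" using M enat by simp
        ultimately have "M \<in> (if enat j \<in> B then P A j - P A (Suc j) else {})" by simp
        then show ?thesis by blast
      next
        case infinity
        have "\<infinity> \<in> B" "M \<in> Csets S" using M infinity by simp_all
        moreover have "\<forall>j. M \<in> P A j" using PN infinity \<open>M \<in> Csets S\<close> by simp
        ultimately show ?thesis by simp
      qed
    next
      fix M assume M: "M \<in> (\<Union>j. if enat j \<in> B then P A j - P A (Suc j) else {}) \<union> (if \<infinity> \<in> B then (\<Inter>j. P A j) \<inter> Csets S else {})"
      then consider j where "enat j \<in> B" "M \<in> P A j" "M \<notin> P A (Suc j)"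
        | "\<infinity> \<in> B" "\<forall>j. M \<in> P A j" "M \<in> Csets S"
        by (auto split: if_splits)
      then show "M \<in> {M \<in> Csets S. Ncount A M \<in> B}"
      proof cases
        case 1
        then have "M \<in> Csets S" "enat j \<le> Ncount A M" "\<not> enat (Suc j) \<le> Ncount A M"
          using PN by blast+
        then have "Ncount A M = enat j"
          by (cases "Ncount A M") auto
        then show ?thesis using 1 \<open>M \<in> Csets S\<close> by simp
      next
        case 2
        then have "\<forall>j. enat j \<le> Ncount A M" using PN by blast
        then have "Ncount A M = \<infinity>"
        proof (cases "Ncount A M")
          case (enat i)
          then have False using \<open>\<forall>j. enat j \<le> Ncount A M\<close>[rule_format, of "Suc i"] by simp
          then show ?thesis ..
        qed simp
        then show ?thesis using 2 by simp
      qed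
    qed
    have "(\<Union>j. if enat j \<in> B then P A j - P A (Suc j) else {}) \<in> HH S E"
      using Pin[OF A] by (intro sa.countable_UN) auto
    moreover have "(\<Inter>j. P A j) \<in> HH S E"
      using Pin[OF A] by (intro sa.countable_INT) auto
    then have "(\<Inter>j. P A j) \<inter> Csets S \<in> HH S E" using sa.top by blast
    then have "(if \<infinity> \<in> B then (\<Inter>j. P A j) \<inter> Csets S else {}) \<in> HH S E"
      by simp
    ultimately show "{M \<in> Csets S. Ncount A M \<in> B} \<in> HH S E" unfolding eq by blast
  qed
qed

end
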